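(* Under the hypotheses and notation of the following setting: $M_1,M_2$ are commuting $2$-qubit Hermitian unitaries whose joint $+1$ eigenspace is spanned by the unit vector $\ket\psi$; $M_0=I\otimes I$, $M_3=M_1M_2$; $M_j=I\otimes N_{j0}+X\otimes N_{j1}+Y\otimes N_{j2}+Z\otimes N_{j3}$; $c_j=\tfrac12\operatorname{tr}(N_{j3})$; $p_\pm=\frac{1\pm(c_1+c_2+c_3)}{2}$. For a $2\times 2$ matrix $A$ let $A^\circ=A-\tfrac12\operatorname{tr}(A)I$ denote its traceless part, and define $$M_+=\frac{1}{2p_+}\sum_{j=1}^3\big(N_{j0}+N_{j3}\big)^\circ\ (\text{if }p_+>0),\qquad M_-=\frac{1}{2p_-}\sum_{j=1}^3\big(N_{j0}-N_{j3}\big)^\circ\ (\text{if }p_->0).$$ Then if the first qubit of $\ket\psi$ is measured in the computational basis and outcome $+1$ occurs, the post-measurement state is $\ket0\otimes\ket{\phi_+}$ with $\ket{\phi_+}\bra{\phi_+}=\tfrac12(I+M_+)$; if outcome $-1$ occurs, the post-measurement state is $\ket1\otimes\ket{\phi_-}$ with $\ket{\phi_-}\bra{\phi_-}=\tfrac12(I+M_-)$. In particular $M_\pm$ are Hermitian unitaries having $\ket{\phi_\pm}$ as $+1$ eigenvector.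
   Context: $X,Y,Z$ are the Pauli matrices. The post-measurement state for outcome $+1$ is $(\ket0\bra0\otimes I)\ket\psi/\sqrt{p_+}$ and for outcome $-1$ is $(\ket1\bra1\otimes I)\ket\psi/\sqrt{p_-}$. *)

theory Defs
  imports "HOL-Analysis.Analysis"
begin

text \<open>One-qubit objects: vectors complex^2, matrices complex^2^2 (index 0 = |0>, 1 = |1>).
Two-qubit objects: index type 2 \<times> 2 (first component = first qubit).\<close>

type_synonym qmat1 = "complex^2^2"
type_synonym qvec1 = "complex^2"
type_synonym qmat2 = "complex^(2\<times>2)^(2\<times>2)"
type_synonym qvec2 = "complex^(2\<times>2)"

definition cadj :: "complex^'n^'m \<Rightarrow> complex^'m^'n" where
  "cadj A = (\<chi> i j. cnj (A $ j $ i))"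

definition hermitian :: "complex^'n^'n \<Rightarrow> bool" where
  "hermitian A \<longleftrightarrow> cadj A = A"

definition unitary :: "complex^'n^'n \<Rightarrow> bool" where
  "unitary A \<longleftrightarrow> A ** cadj A = mat 1 \<and> cadj A ** A = mat 1"

definition ctrace :: "complex^'n^'n \<Rightarrow> complex" where
  "ctrace A = (\<Sum>i\<in>UNIV. A $ i $ i)"

definition cmscale :: "complex \<Rightarrow> complex^'n^'m \<Rightarrow> complex^'n^'m" where
  "cmscale c A = (\<chi> i j. c * A $ i $ j)"

definition traceless :: "qmat1 \<Rightarrow> qmat1" where
  "traceless A = A - cmscale (ctrace A / 2) (mat 1)"

definition kron :: "qmat1 \<Rightarrow> qmat1 \<Rightarrow> qmat2" where
  "kron A B = (\<chi> p q. A $ fst p $ fst q * B $ snd p $ snd q)"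

definition kvec :: "qvec1 \<Rightarrow> qvec1 \<Rightarrow> qvec2" where
  "kvec u v = (\<chi> p. u $ fst p * v $ snd p)"

definition outer :: "complex^'n \<Rightarrow> complex^'n \<Rightarrow> complex^'n^'n" where
  "outer u v = (\<chi> i j. u $ i * cnj (v $ j))"

definition ket0 :: qvec1 where "ket0 = (\<chi> i. if i = 0 then 1 else 0)"
definition ket1 :: qvec1 where "ket1 = (\<chi> i. if i = 1 then 1 else 0)"

definition Id2 :: qmat1 where "Id2 = mat 1"
definition PauliX :: qmat1 where
  "PauliX = (\<chi> i j. if i \<noteq> j then 1 else 0)"
definition PauliY :: qmat1 where
  "PauliY = (\<chi> i j. if i = 0 \<and> j = 1 then - \<i> else if i = 1 \<and> j = 0 then \<i> else 0)"
definition PauliZ :: qmat1 where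
  "PauliZ = (\<chi> i j. if i = j then (if i = 0 then 1 else -1) else 0)"

definition pauli_decomp :: "qmat2 \<Rightarrow> (nat \<Rightarrow> qmat1) \<Rightarrow> bool" where
  "pauli_decomp M N \<longleftrightarrow>
     M = kron Id2 (N 0) + kron PauliX (N 1) + kron PauliY (N 2) + kron PauliZ (N 3)"

definition cval :: "(nat \<Rightarrow> nat \<Rightarrow> qmat1) \<Rightarrow> nat \<Rightarrow> complex" where
  "cval N j = ctrace (N j 3) / 2"
definition pplus :: "(nat \<Rightarrow> nat \<Rightarrow> qmat1) \<Rightarrow> complex" where
  "pplus N = (1 + (cval N 1 + cval N 2 + cval N 3)) / 2"
definition pminus :: "(nat \<Rightarrow> nat \<Rightarrow> qmat1) \<Rightarrow> complex" where
  "pminus N = (1 - (cval N 1 + cval N 2 + cval N 3)) / 2"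
definition Mplus :: "(nat \<Rightarrow> nat \<Rightarrow> qmat1) \<Rightarrow> qmat1" where
  "Mplus N = cmscale (1 / (2 * pplus N)) (\<Sum>j\<in>{1,2,3}. traceless (N j 0 + N j 3))"
definition Mminus :: "(nat \<Rightarrow> nat \<Rightarrow> qmat1) \<Rightarrow> qmat1" where
  "Mminus N = cmscale (1 / (2 * pminus N)) (\<Sum>j\<in>{1,2,3}. traceless (N j 0 - N j 3))"

end

theory Submission imports Defs begin


definition cinner :: "complex^'n \<Rightarrow> complex^'n \<Rightarrow> complex" where
  "cinner u v = (\<Sum>i\<in>UNIV. cnj (u$i) * v$i)"

lemma cinner_adj: "cinner u (A *v v) = cinner (cadj A *v u) v"
  unfolding cinner_def matrix_vector_mult_def cadj_def
  apply (simp add: sum_distrib_left sum_distrib_right)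
  apply (subst sum.swap) apply (simp add: mult_ac)
  done

lemma cinner_add: "cinner u (x + y) = cinner u x + cinner u y"
  unfolding cinner_def by (simp add: distrib_left sum.distrib)

lemma cinner_scale: "cinner u (c *s x) = c * cinner u x"
  unfolding cinner_def by (simp add: sum_distrib_left mult_ac)

lemma norm_sq_vec: "(norm (x::complex^'n))^2 = (\<Sum>i\<in>UNIV. (cmod (x$i))^2)"
  by (simp add: norm_vec_def L2_set_def sum_nonneg)

lemma cinner_self: "cinner x x = complex_of_real ((norm (x::complex^'n))^2)"
  unfolding norm_sq_vec cinner_def of_real_sum
  by (intro sum.cong refl) (metis complex_norm_square mult.commute of_real_power)

lemma herm_sq: "hermitian M \<Longrightarrow> unitary M \<Longrightarrow> M ** M = mat 1"
  unfolding hermitian_def unitary_def by metis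

lemma fix1: "M ** M = mat 1 \<Longrightarrow> M *v ((mat 1 + M) *v x) = (mat 1 + M) *v x"
  by (simp add: matrix_vector_mult_add_rdistrib matrix_vector_right_distrib matrix_vector_mul_assoc add.commute)

lemma matrix_add_rdistrib: "((B + C) ** A) = (B ** A) + (C ** A)"
  by (vector matrix_matrix_mult_def sum.distrib[symmetric] field_simps)

lemma rho_entries:
  fixes M1 M2 :: "complex^'n^'n" and psi :: "complex^'n"
  assumes h1: "hermitian M1" and u1: "unitary M1"
    and h2: "hermitian M2" and u2: "unitary M2"
    and comm: "M1 ** M2 = M2 ** M1"
    and nrm: "norm psi = 1"
    and joint: "{v. M1 *v v = v \<and> M2 *v v = v} = {c *s psi | c. True}"
  shows "(mat 1 + M1 + M2 + M1 ** M2) $ i $ k = 4 * cnj (psi $ k) * psi $ i"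
proof -
  have s1: "M1 ** M1 = mat 1" using h1 u1 by (rule herm_sq)
  have s2: "M2 ** M2 = mat 1" using h2 u2 by (rule herm_sq)
  have "psi = 1 *s psi" by simp
  hence pin: "psi \<in> {c *s psi | c. True}" by blast
  hence p1: "M1 *v psi = psi" and p2: "M2 *v psi = psi" using joint by blast+
  have pp: "cinner psi psi = 1" using nrm by (simp add: cinner_self)
  have ci1: "cinner psi (M1 *v y) = cinner psi y" for y
    using h1 p1 by (simp add: cinner_adj hermitian_def)
  have ci2: "cinner psi (M2 *v y) = cinner psi y" for y
    using h2 p2 by (simp add: cinner_adj hermitian_def)
  have key: "(mat 1 + M1) *v ((mat 1 + M2) *v v) = (4 * cinner psi v) *s psi" for v
  proof -
    let ?w = "(mat 1 + M1) *v ((mat 1 + M2) *v v)"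
    have a: "M1 *v ?w = ?w" using s1 by (rule fix1)
    have c: "M2 ** (mat 1 + M1) = (mat 1 + M1) ** M2"
      by (simp add: matrix_add_ldistrib matrix_add_rdistrib comm)
    have "M2 *v ?w = (mat 1 + M1) *v (M2 *v ((mat 1 + M2) *v v))"
      by (simp add: matrix_vector_mul_assoc matrix_mul_assoc c)
    also have "\<dots> = ?w" using s2 fix1 by metis
    finally have b: "M2 *v ?w = ?w" .
    have "?w \<in> {c *s psi | c. True}" using a b joint by blast
    then obtain c where wc: "?w = c *s psi" by blast
    have "cinner psi ?w = 4 * cinner psi v"
      by (simp add: matrix_vector_mult_add_rdistrib cinner_add ci1 ci2)
    moreover have "cinner psi ?w = c" using wc pp by (simp add: cinner_scale)
    ultimately show ?thesis using wc by simp
  qed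
  have e: "((mat 1 + M1) ** (mat 1 + M2)) = mat 1 + M1 + M2 + M1 ** M2"
    by (simp add: matrix_add_ldistrib matrix_add_rdistrib add_ac)
  let ?e = "(\<chi> j. if j = k then 1 else 0) :: complex^'n"
  have "((mat 1 + M1) ** (mat 1 + M2)) *v ?e = (4 * cinner psi ?e) *s psi"
    using key by (simp add: matrix_vector_mul_assoc)
  hence "(((mat 1 + M1) ** (mat 1 + M2)) *v ?e) $ i = ((4 * cinner psi ?e) *s psi) $ i" by simp
  thus ?thesis unfolding e
    by (simp add: matrix_vector_mult_def cinner_def if_distrib cong: if_cong)
qed

lemma two0: "(2::2) = 0" by simp
lemma UNIV2: "(UNIV :: 2 set) = {0, 1}"
  using UNIV_2 two0 by (simp add: insert_commute)
lemma sum2: "sum f (UNIV::2 set) = f 0 + f 1" by (simp add: UNIV2)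
lemma sum22: "sum f (UNIV::(2\<times>2) set) = f (0,0) + f (0,1) + f(1,0) + f(1,1)"
proof -
  have "sum f (UNIV::(2\<times>2) set) = (\<Sum>x\<in>UNIV. \<Sum>y\<in>UNIV. f (x,y))"
    unfolding sum.cartesian_product UNIV_Times_UNIV by simp
  thus ?thesis by (simp add: sum2 add_ac)
qed




lemma forall2: "(\<forall>i::2. P i) \<longleftrightarrow> P 0 \<and> P 1"
  by (metis UNIV2 UNIV_I insertE singletonD)

lemma post_props:
  fixes phi :: "complex^2" and Mx :: qmat1
  assumes na: "phi$0 * cnj(phi$0) + phi$1 * cnj(phi$1) = 1"
    and Mx: "\<And>j l. Mx$j$l = 2 * phi$j * cnj(phi$l) - (if j = l then 1 else 0)"
  shows "outer phi phi = cmscale (1/2) (Id2 + Mx) \<and> hermitian Mx \<and> unitary Mx \<and> Mx *v phi = phi"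
proof -
  have o1: "outer phi phi = cmscale (1/2) (Id2 + Mx)"
    unfolding vec_eq_iff outer_def cmscale_def Id2_def
    by (simp add: Mx mat_def)
  have h: "hermitian Mx"
    unfolding hermitian_def vec_eq_iff cadj_def
    by (simp add: Mx)
  have sq: "Mx ** Mx = mat 1"
    unfolding vec_eq_iff matrix_matrix_mult_def mat_def
    apply (simp add: forall2 sum2 Mx)
    using na by algebra
  have u: "unitary Mx" using h sq unfolding unitary_def hermitian_def by simp
  have e: "Mx *v phi = phi"
    unfolding vec_eq_iff matrix_vector_mult_def
    apply (simp add: forall2 sum2 Mx)
    using na by algebra
  show ?thesis using o1 h u e by blast
qed



lemma exh2: "(x::2) = 0 \<or> x = 1" using UNIV2 by auto

lemma pd0: "pauli_decomp M Q \<Longrightarrow> M $ (0,j) $ (0,l) = Q 0 $ j $ l + Q 3 $ j $ l"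
  by (simp add: pauli_decomp_def kron_def Id2_def PauliX_def PauliY_def PauliZ_def mat_def)
lemma pd1: "pauli_decomp M Q \<Longrightarrow> M $ (1,j) $ (1,l) = Q 0 $ j $ l - Q 3 $ j $ l"
  by (simp add: pauli_decomp_def kron_def Id2_def PauliX_def PauliY_def PauliZ_def mat_def)

lemma proj0: "(kron (outer ket0 ket0) Id2 *v psi) $ (i,j) = (if i = 0 then psi $ (0,j) else 0)"
  unfolding matrix_vector_mult_def
  using exh2[of i] exh2[of j] by (auto simp: sum22 kron_def outer_def ket0_def Id2_def mat_def)

lemma proj1: "(kron (outer ket1 ket1) Id2 *v psi) $ (i,j) = (if i = 1 then psi $ (1,j) else 0)"
  unfolding matrix_vector_mult_def
  using exh2[of i] exh2[of j] by (auto simp: sum22 kron_def outer_def ket1_def Id2_def mat_def)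




lemma aux_div: fixes r x d :: complex assumes "r \<noteq> 0"
  shows "(4 * x - (2 * r) * d) / (2 * r) = 2 * x / r - d"
  using assms by (simp add: field_simps)

lemma branch:
  fixes a :: "complex^2" and P :: real and Mx Sm :: qmat1 and v :: qvec2 and ket :: qvec1 and post :: qvec2
  assumes P: "P > 0"
   and nP: "a$0*cnj(a$0) + a$1*cnj(a$1) = of_real P"
   and Mx: "Mx = cmscale (1/(2* of_real P)) Sm"
   and Sm: "\<And>j l. Sm $ j $ l = 4 * cnj(a$l) * a$j - (2 * of_real P) * (if j = l then 1 else 0)"
   and post: "post = (1 / csqrt (of_real P)) *s v"
   and v: "\<And>i j. v $ (i,j) = ket $ i * a $ j"
  shows "\<exists>phi. post = kvec ket phi \<and> outer phi phi = cmscale (1/2) (Id2 + Mx) \<and>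
        hermitian Mx \<and> unitary Mx \<and> Mx *v phi = phi"
proof -
  define s where "s = (of_real (sqrt P) :: complex)"
  have ss: "s * s = of_real P" unfolding s_def using P
    by (simp flip: of_real_mult)
  have s0: "s \<noteq> 0" using P unfolding s_def by simp
  have P0: "(of_real P :: complex) \<noteq> 0" using P by simp
  have cs: "cnj s = s" unfolding s_def by simp
  have cq: "csqrt (of_real P) = s" unfolding s_def using P by (simp add: csqrt_of_real)
  define phi where "phi = (\<chi> j. a $ j / s)"
  have ph: "phi $ j = a $ j / s" for j unfolding phi_def by simp
  have pk: "post = kvec ket phi"
    unfolding vec_eq_iff post cq kvec_def
    by (auto simp: split_paired_All v ph)
  have na: "phi$0 * cnj(phi$0) + phi$1 * cnj(phi$1) = 1"
  proof -
    have "phi$0 * cnj(phi$0) + phi$1 * cnj(phi$1) = (a$0*cnj(a$0) + a$1*cnj(a$1)) / (s * s)"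
      by (simp add: ph cs times_divide_times_eq add_divide_distrib)
    thus ?thesis using nP ss P0 by simp
  qed
  have me: "Mx$j$l = 2 * phi$j * cnj(phi$l) - (if j = l then 1 else 0)" for j l
  proof -
    have "Mx$j$l = (4 * (a$j * cnj(a$l)) - (2 * of_real P) * (if j = l then 1 else 0)) / (2 * of_real P)"
      unfolding Mx cmscale_def by (simp add: Sm mult_ac)
    also have "\<dots> = 2 * (a$j * cnj(a$l)) / (of_real P) - (if j = l then 1 else 0)"
      by (rule aux_div[OF P0])
    also have "\<dots> = 2 * phi$j * cnj(phi$l) - (if j = l then 1 else 0)"
      by (simp add: ph cs times_divide_times_eq ss)
    finally show ?thesis .
  qed
  show ?thesis using pk post_props[OF na me] by blast
qed


lemma sum123: "(\<Sum>m\<in>{1,2,3::nat}. f m) = f 1 + f 2 + f 3" by (simp add: add_ac)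
lemma tl3: "(traceless A + traceless B + traceless C) $ j $ l = (A$j$l + B$j$l + C$j$l) - (ctrace A + ctrace B + ctrace C)/2 * (if j = l then 1 else 0)"
  by (simp add: traceless_def cmscale_def mat_def algebra_simps add_divide_distrib)
lemma ctr: "ctrace (A::qmat1) = A$0$0 + A$1$1" by (simp add: ctrace_def sum2)



theorem mainTheorem17:
  fixes M1 M2 :: qmat2 and psi :: qvec2 and N :: "nat \<Rightarrow> nat \<Rightarrow> qmat1"
  assumes herm1: "hermitian M1" and unit1: "unitary M1"
    and herm2: "hermitian M2" and unit2: "unitary M2"
    and comm: "M1 ** M2 = M2 ** M1"
    and psi_unit: "norm psi = 1"
    and joint: "{v. M1 *v v = v \<and> M2 *v v = v} = {c *s psi | c. True}"
    and dec1: "pauli_decomp M1 (N 1)"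
    and dec2: "pauli_decomp M2 (N 2)"
    and dec3: "pauli_decomp (M1 ** M2) (N 3)"
  defines "probplus \<equiv> (norm (kron (outer ket0 ket0) Id2 *v psi))\<^sup>2"
    and "probminus \<equiv> (norm (kron (outer ket1 ket1) Id2 *v psi))\<^sup>2"
    and "postplus \<equiv> (1 / csqrt (pplus N)) *s (kron (outer ket0 ket0) Id2 *v psi)"
    and "postminus \<equiv> (1 / csqrt (pminus N)) *s (kron (outer ket1 ket1) Id2 *v psi)"
  shows "pplus N = complex_of_real probplus \<and> pminus N = complex_of_real probminus \<and>
    (probplus > 0 \<longrightarrow> (\<exists>phi. postplus = kvec ket0 phi \<and>
        outer phi phi = cmscale (1/2) (Id2 + Mplus N) \<and>
        hermitian (Mplus N) \<and> unitary (Mplus N) \<and> Mplus N *v phi = phi)) \<and>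
    (probminus > 0 \<longrightarrow> (\<exists>phi. postminus = kvec ket1 phi \<and>
        outer phi phi = cmscale (1/2) (Id2 + Mminus N) \<and>
        hermitian (Mminus N) \<and> unitary (Mminus N) \<and> Mminus N *v phi = phi))"
proof -
  have R: "(mat 1 + M1 + M2 + M1 ** M2) $ i $ k = 4 * cnj (psi $ k) * psi $ i" for i k
    using rho_entries[OF herm1 unit1 herm2 unit2 comm psi_unit joint] .
  have Fp: "(if j = l then 1 else 0) + (N 1 0 $ j $ l + N 1 3 $ j $ l) + (N 2 0 $ j $ l + N 2 3 $ j $ l)
      + (N 3 0 $ j $ l + N 3 3 $ j $ l) = 4 * cnj (psi $ (0,l)) * psi $ (0,j)" for j l
  proof -
    have "(mat 1 :: qmat2) $ (0,j) $ (0,l) = (if j = l then 1 else 0)" by (simp add: mat_def)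
    thus ?thesis using R[of "(0,j)" "(0,l)"]
      by (simp only: vector_add_component pd0[OF dec1] pd0[OF dec2] pd0[OF dec3])
  qed
  have Fm: "(if j = l then 1 else 0) + (N 1 0 $ j $ l - N 1 3 $ j $ l) + (N 2 0 $ j $ l - N 2 3 $ j $ l)
      + (N 3 0 $ j $ l - N 3 3 $ j $ l) = 4 * cnj (psi $ (1,l)) * psi $ (1,j)" for j l
  proof -
    have "(mat 1 :: qmat2) $ (1,j) $ (1,l) = (if j = l then 1 else 0)" by (simp add: mat_def)
    thus ?thesis using R[of "(1,j)" "(1,l)"]
      by (simp only: vector_add_component pd1[OF dec1] pd1[OF dec2] pd1[OF dec3])
  qed
  have pp: "probplus = (cmod (psi $ (0,0)))^2 + (cmod (psi $ (0,1)))^2"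
    unfolding probplus_def norm_sq_vec sum22 proj0 by simp
  have pm: "probminus = (cmod (psi $ (1,0)))^2 + (cmod (psi $ (1,1)))^2"
    unfolding probminus_def norm_sq_vec sum22 proj1 by simp
  have n1: "(cmod (psi $ (0,0)))^2 + (cmod (psi $ (0,1)))^2 + (cmod (psi $ (1,0)))^2 + (cmod (psi $ (1,1)))^2 = 1"
    using psi_unit norm_sq_vec[of psi] unfolding sum22 by simp
  have cpp: "complex_of_real probplus = psi $ (0,0) * cnj (psi $ (0,0)) + psi $ (0,1) * cnj (psi $ (0,1))"
    unfolding pp by (simp only: of_real_add complex_norm_square)
  have cpm: "complex_of_real probminus = psi $ (1,0) * cnj (psi $ (1,0)) + psi $ (1,1) * cnj (psi $ (1,1))"
    unfolding pm by (simp only: of_real_add complex_norm_square)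
  have csum: "complex_of_real probplus + complex_of_real probminus = 1"
  proof -
    have "probplus + probminus = 1" using n1 unfolding pp pm by simp
    thus ?thesis by (metis of_real_1 of_real_add)
  qed
  define T0 where "T0 = N 1 0 $ 0 $ 0 + N 1 0 $ 1 $ 1 + N 2 0 $ 0 $ 0 + N 2 0 $ 1 $ 1 + N 3 0 $ 0 $ 0 + N 3 0 $ 1 $ 1"
  define T3 where "T3 = N 1 3 $ 0 $ 0 + N 1 3 $ 1 $ 1 + N 2 3 $ 0 $ 0 + N 2 3 $ 1 $ 1 + N 3 3 $ 0 $ 0 + N 3 3 $ 1 $ 1"
  have trp: "2 + T0 + T3 = 4 * complex_of_real probplus"
    using Fp[of 0 0, unfolded if_P[OF refl]] Fp[of 1 1, unfolded if_P[OF refl]] unfolding cpp T0_def T3_def by algebra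
  have trm: "2 + T0 - T3 = 4 * complex_of_real probminus"
    using Fm[of 0 0, unfolded if_P[OF refl]] Fm[of 1 1, unfolded if_P[OF refl]] unfolding cpm T0_def T3_def by algebra
  have T00: "T0 = 0" using trp trm csum by algebra
  have "pplus N = (2 + T3) / 4"
    unfolding pplus_def cval_def ctrace_def sum2 T3_def by (simp add: field_simps)
  hence ppl: "pplus N = complex_of_real probplus"
    using trp T00 by simp
  have "pminus N = (2 - T3) / 4"
    unfolding pminus_def cval_def ctrace_def sum2 T3_def by (simp add: field_simps)
  hence pmi: "pminus N = complex_of_real probminus"
    using trm T00 by simp
  define d where "d = (\<lambda>j l::2. if j = l then (1::complex) else 0)"
  define Sp where "Sp = (\<Sum>j\<in>{1,2,3}. traceless (N j 0 + N j 3))"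
  define Sn where "Sn = (\<Sum>j\<in>{1,2,3}. traceless (N j 0 - N j 3))"
  have Spe: "Sp $ j $ l = 4 * cnj ((\<chi> j. psi $ (0,j)) $ l) * (\<chi> j. psi $ (0,j)) $ j
      - (2 * complex_of_real probplus) * (if j = l then 1 else 0)" for j l
  proof -
    have e1: "Sp $ j $ l = ((N 1 0 + N 1 3)$j$l + (N 2 0 + N 2 3)$j$l + (N 3 0 + N 3 3)$j$l)
       - (ctrace (N 1 0 + N 1 3) + ctrace (N 2 0 + N 2 3) + ctrace (N 3 0 + N 3 3))/2 * d j l"
      unfolding Sp_def sum123 tl3 d_def ..
    have e2: "ctrace (N 1 0 + N 1 3) + ctrace (N 2 0 + N 2 3) + ctrace (N 3 0 + N 3 3) = T0 + T3"
      by (simp add: ctr T0_def T3_def algebra_simps)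
    have e3: "d j l + (N 1 0 $ j $ l + N 1 3 $ j $ l) + (N 2 0 $ j $ l + N 2 3 $ j $ l)
      + (N 3 0 $ j $ l + N 3 3 $ j $ l) = 4 * cnj (psi $ (0,l)) * psi $ (0,j)"
      using Fp[of j l] unfolding d_def .
    have "Sp $ j $ l = 4 * cnj (psi $ (0,l)) * psi $ (0,j) - (2 * complex_of_real probplus) * d j l"
      using e1 e2 e3 T00 trp unfolding vector_add_component by algebra
    thus ?thesis unfolding d_def by simp
  qed
  have Sne: "Sn $ j $ l = 4 * cnj ((\<chi> j. psi $ (1,j)) $ l) * (\<chi> j. psi $ (1,j)) $ j
      - (2 * complex_of_real probminus) * (if j = l then 1 else 0)" for j l
  proof -
    have e1: "Sn $ j $ l = ((N 1 0 - N 1 3)$j$l + (N 2 0 - N 2 3)$j$l + (N 3 0 - N 3 3)$j$l)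
       - (ctrace (N 1 0 - N 1 3) + ctrace (N 2 0 - N 2 3) + ctrace (N 3 0 - N 3 3))/2 * d j l"
      unfolding Sn_def sum123 tl3 d_def ..
    have e2: "ctrace (N 1 0 - N 1 3) + ctrace (N 2 0 - N 2 3) + ctrace (N 3 0 - N 3 3) = T0 - T3"
      by (simp add: ctr T0_def T3_def algebra_simps)
    have e3: "d j l + (N 1 0 $ j $ l - N 1 3 $ j $ l) + (N 2 0 $ j $ l - N 2 3 $ j $ l)
      + (N 3 0 $ j $ l - N 3 3 $ j $ l) = 4 * cnj (psi $ (1,l)) * psi $ (1,j)"
      using Fm[of j l] unfolding d_def .
    have "Sn $ j $ l = 4 * cnj (psi $ (1,l)) * psi $ (1,j) - (2 * complex_of_real probminus) * d j l"
      using e1 e2 e3 T00 trm unfolding vector_minus_component by algebra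
    thus ?thesis unfolding d_def by simp
  qed
  have bp: "probplus > 0 \<longrightarrow> (\<exists>phi. postplus = kvec ket0 phi \<and>
        outer phi phi = cmscale (1/2) (Id2 + Mplus N) \<and>
        hermitian (Mplus N) \<and> unitary (Mplus N) \<and> Mplus N *v phi = phi)"
  proof
    assume P: "probplus > 0"
    show "\<exists>phi. postplus = kvec ket0 phi \<and>
        outer phi phi = cmscale (1/2) (Id2 + Mplus N) \<and>
        hermitian (Mplus N) \<and> unitary (Mplus N) \<and> Mplus N *v phi = phi"
    proof (rule branch[OF P _ _ Spe])
      show "(\<chi> j. psi $ (0,j)) $ 0 * cnj ((\<chi> j. psi $ (0,j)) $ 0) + (\<chi> j. psi $ (0,j)) $ 1 * cnj ((\<chi> j. psi $ (0,j)) $ 1) = complex_of_real probplus"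
        using cpp by simp
      show "Mplus N = cmscale (1 / (2 * complex_of_real probplus)) Sp"
        unfolding Mplus_def Sp_def ppl ..
      show "postplus = (1 / csqrt (complex_of_real probplus)) *s (kron (outer ket0 ket0) Id2 *v psi)"
        unfolding postplus_def ppl ..
      show "(kron (outer ket0 ket0) Id2 *v psi) $ (i, j) = ket0 $ i * (\<chi> j. psi $ (0,j)) $ j" for i j
        unfolding proj0 by (simp add: ket0_def)
    qed
  qed
  have bm: "probminus > 0 \<longrightarrow> (\<exists>phi. postminus = kvec ket1 phi \<and>
        outer phi phi = cmscale (1/2) (Id2 + Mminus N) \<and>
        hermitian (Mminus N) \<and> unitary (Mminus N) \<and> Mminus N *v phi = phi)"
  proof
    assume P: "probminus > 0"
    show "\<exists>phi. postminus = kvec ket1 phi \<and>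
        outer phi phi = cmscale (1/2) (Id2 + Mminus N) \<and>
        hermitian (Mminus N) \<and> unitary (Mminus N) \<and> Mminus N *v phi = phi"
    proof (rule branch[OF P _ _ Sne])
      show "(\<chi> j. psi $ (1,j)) $ 0 * cnj ((\<chi> j. psi $ (1,j)) $ 0) + (\<chi> j. psi $ (1,j)) $ 1 * cnj ((\<chi> j. psi $ (1,j)) $ 1) = complex_of_real probminus"
        using cpm by simp
      show "Mminus N = cmscale (1 / (2 * complex_of_real probminus)) Sn"
        unfolding Mminus_def Sn_def pmi ..
      show "postminus = (1 / csqrt (complex_of_real probminus)) *s (kron (outer ket1 ket1) Id2 *v psi)"
        unfolding postminus_def pmi ..
      show "(kron (outer ket1 ket1) Id2 *v psi) $ (i, j) = ket1 $ i * (\<chi> j. psi $ (1,j)) $ j" for i j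
        unfolding proj1 by (simp add: ket1_def)
    qed
  qed
  show ?thesis using ppl pmi bp bm by blast
qed

end
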